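(* Let $n\ge 5$ and let $C_n$ be the cycle with $n$ vertices. Then $C_n$ is not a $3$-threshold graph: there are no real numbers $\theta_1<\theta_2<\theta_3$ and map $r:V(C_n)\to\mathbb{R}$ such that for all distinct vertices $u,v$, $uv$ is an edge if and only if $r(u)+r(v)\in[\theta_1,\theta_2)\cup[\theta_3,\infty)$.
   Context: All graphs are finite and simple. $C_n$ denotes the cycle with $n$ vertices. *)

theory Defs
  imports Complex_Main
begin

definition cycle_adj :: "nat \<Rightarrow> nat \<Rightarrow> nat \<Rightarrow> bool" where
  "cycle_adj n u v \<longleftrightarrow> u < n \<and> v < n \<and> u \<noteq> v \<and> (v = (u + 1) mod n \<or> u = (v + 1) mod n)"

definition three_threshold :: "'a set \<Rightarrow> ('a \<Rightarrow> 'a \<Rightarrow> bool) \<Rightarrow> bool" where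
  "three_threshold V E \<longleftrightarrow>
     (\<exists>(t1::real) t2 t3 (r::'a \<Rightarrow> real). t1 < t2 \<and> t2 < t3 \<and>
        (\<forall>u\<in>V. \<forall>v\<in>V. u \<noteq> v \<longrightarrow>
           (E u v \<longleftrightarrow> (t1 \<le> r u + r v \<and> r u + r v < t2) \<or> t3 \<le> r u + r v)))"

end

theory Submission imports Defs begin

definition okv :: "real \<Rightarrow> real \<Rightarrow> real \<Rightarrow> real \<Rightarrow> bool" where
  "okv t1 t2 t3 x \<longleftrightarrow> (t1 \<le> x \<and> x < t2) \<or> t3 \<le> x"

lemma core:
  fixes t1 t2 t3 v0 v1 v2 v3 v4 vm :: real
  assumes t: "t1 < t2" "t2 < t3"
    and mn: "v0 \<le> v1" "v0 \<le> v2" "v0 \<le> v3" "v0 \<le> v4" "v0 \<le> vm"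
    and e: "okv t1 t2 t3 (v0+v1)" "okv t1 t2 t3 (v1+v2)" "okv t1 t2 t3 (v2+v3)"
           "okv t1 t2 t3 (v3+v4)" "okv t1 t2 t3 (v0+vm)"
    and ne: "\<not> okv t1 t2 t3 (v0+v2)" "\<not> okv t1 t2 t3 (v0+v3)" "\<not> okv t1 t2 t3 (v1+v3)"
            "\<not> okv t1 t2 t3 (v1+v4)" "\<not> okv t1 t2 t3 (v1+vm)" "\<not> okv t1 t2 t3 (v2+v4)"
            "\<not> okv t1 t2 t3 (v2+vm)"
    and h: "t3 \<le> v1 + v2"
  shows False
proof -
  have a1: "v1 + vm < t3" using ne(5) t unfolding okv_def by auto
  have a2: "v0 + vm \<ge> t1" using e(5) t unfolding okv_def by auto
  have "v0 + v2 > t1" using a1 a2 h by linarith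
  hence "v0 + v2 \<ge> t2" using ne(1) unfolding okv_def by auto
  hence "v2 + v3 \<ge> t2" using mn by linarith
  hence h23: "v2 + v3 \<ge> t3" using e(3) unfolding okv_def by auto
  have "v1 + v3 < t3" using ne(3) t unfolding okv_def by auto
  hence "v0 + v1 < t3" using mn by linarith
  hence L1: "v0 + v1 < t2" using e(1) unfolding okv_def by auto
  have "v2 + v4 < t3" using ne(6) t unfolding okv_def by auto
  hence "v1 > v4" using h by linarith
  hence "v3 + v4 < t3" using \<open>v1 + v3 < t3\<close> by linarith
  hence L2: "v3 + v4 < t2" using e(4) unfolding okv_def by auto
  have "v2 + vm < t3" using ne(7) t unfolding okv_def by auto
  hence L3: "v3 > vm" using h23 by linarith
  have "v0 + v3 > t1" using L3 a2 by linarith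
  hence L3': "v0 + v3 \<ge> t2" using ne(2) unfolding okv_def by auto
  have "v1 + v4 \<ge> t1" using e(1) mn t unfolding okv_def by auto
  hence L4: "v1 + v4 \<ge> t2" using ne(4) unfolding okv_def by auto
  show False using L1 L2 L3' L4 by linarith
qed

lemma split:
  fixes t1 t2 t3 v0 v1 v2 vm vm2 :: real
  assumes t: "t1 < t2" "t2 < t3"
    and mn: "v0 \<le> v1" "v0 \<le> v2" "v0 \<le> vm" "v0 \<le> vm2"
    and e: "okv t1 t2 t3 (v0+v1)" "okv t1 t2 t3 (v1+v2)" "okv t1 t2 t3 (v0+vm)" "okv t1 t2 t3 (vm+vm2)"
    and ne: "\<not> okv t1 t2 t3 (v2+vm)" "\<not> okv t1 t2 t3 (v1+vm2)"
  shows "t3 \<le> v1 + v2 \<or> t3 \<le> vm + vm2"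
proof (rule ccontr)
  assume c: "\<not> ?thesis"
  have "v2 + vm \<ge> t1" using e(3) mn t unfolding okv_def by auto
  hence "v2 + vm \<ge> t2" using ne(1) unfolding okv_def by auto
  moreover have "v1 + v2 < t2" using e(2) c unfolding okv_def by auto
  ultimately have "vm > v1" by linarith
  have "v1 + vm2 \<ge> t1" using e(1) mn t unfolding okv_def by auto
  hence "v1 + vm2 \<ge> t2" using ne(2) unfolding okv_def by auto
  moreover have "vm + vm2 < t2" using e(4) c unfolding okv_def by auto
  ultimately have "v1 > vm" by linarith
  with \<open>vm > v1\<close> show False by linarith
qed

lemma cyc_char:
  assumes "a < n" "b < n" "n \<ge> 3"
  shows "cycle_adj n a b \<longleftrightarrow> a \<noteq> b \<and> (b = a + 1 \<or> a = b + 1 \<or> (a = n - 1 \<and> b = 0) \<or> (b = n - 1 \<and> a = 0))"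
proof -
  have m1: "(x + 1) mod n = (if x + 1 = n then 0 else x + 1)" if "x < n" for x
    using that by (auto simp: mod_if)
  show ?thesis unfolding cycle_adj_def using assms m1[of a] m1[of b] by auto
qed


lemma rot:
  assumes "y < n" "a < n" "b < n"
  shows "cycle_adj n ((y + a) mod n) ((y + b) mod n) \<longleftrightarrow> cycle_adj n a b"
proof -
  have n: "n > 0" using assms by auto
  have c: "(y + b) mod n = (y + c) mod n \<longleftrightarrow> b mod n = c mod n" for b c
    by (simp add: nat_mod_eq_iff)
  have i: "((y + a) mod n = (y + b) mod n) \<longleftrightarrow> a = b"
    using assms unfolding c by simp
  have s: "((y + a) mod n + 1) mod n = (y + (a + 1)) mod n" for a
    by (simp add: mod_Suc_eq)
  have j: "((y + b) mod n = ((y + a) mod n + 1) mod n) \<longleftrightarrow> b = (a + 1) mod n" if "b < n" for a b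
    unfolding s c using that by simp
  show ?thesis unfolding cycle_adj_def using i j[of b a] j[of a b] assms n by auto
qed

theorem mainTheorem5:
  fixes n :: nat
  assumes "n \<ge> 5"
  shows "\<not> three_threshold {0..<n} (cycle_adj n)"
proof
  assume "three_threshold {0..<n} (cycle_adj n)"
  then obtain t1 t2 t3 :: real and r :: "nat \<Rightarrow> real" where
    t: "t1 < t2" "t2 < t3" and
    H: "\<forall>u\<in>{0..<n}. \<forall>v\<in>{0..<n}. u \<noteq> v \<longrightarrow>
           (cycle_adj n u v \<longleftrightarrow> (t1 \<le> r u + r v \<and> r u + r v < t2) \<or> t3 \<le> r u + r v)"
    unfolding three_threshold_def by blast
  have fin: "finite (r ` {0..<n})" "r ` {0..<n} \<noteq> {}" using assms by auto
  obtain y where y: "y < n" "r y = Min (r ` {0..<n})"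
    using Min_in[OF fin] by auto
  have ymin: "r y \<le> r w" if "w < n" for w
    using y(2) fin that by simp
  define q where "q a = r ((y + a) mod n)" for a
  have P: "cycle_adj n a b \<longleftrightarrow> okv t1 t2 t3 (q a + q b)" if "a < n" "b < n" "a \<noteq> b" for a b
  proof -
    have c: "(y + a) mod n = (y + b) mod n \<longleftrightarrow> a mod n = b mod n"
      by (simp add: nat_mod_eq_iff)
    have ne: "(y + a) mod n \<noteq> (y + b) mod n" using that unfolding c by simp
    have "cycle_adj n ((y + a) mod n) ((y + b) mod n) \<longleftrightarrow> okv t1 t2 t3 (q a + q b)"
      using H ne y(1) unfolding q_def okv_def by auto
    thus ?thesis using rot[OF y(1) that(1,2)] by simp
  qed
  have Q0: "q 0 = r y" unfolding q_def using y(1) by simp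
  have mn: "q 0 \<le> q a" for a unfolding Q0 q_def using ymin y(1) by auto
  have E: "okv t1 t2 t3 (q a + q b)" if "a < n" "b < n" "a \<noteq> b"
    "b = a + 1 \<or> a = b + 1 \<or> (a = n - 1 \<and> b = 0) \<or> (b = n - 1 \<and> a = 0)" for a b
    using P[OF that(1-3)] cyc_char[of a n b] that assms by auto
  have N: "\<not> okv t1 t2 t3 (q a + q b)" if "a < n" "b < n" "a \<noteq> b"
    "\<not> (b = a + 1 \<or> a = b + 1 \<or> (a = n - 1 \<and> b = 0) \<or> (b = n - 1 \<and> a = 0))" for a b
    using P[OF that(1-3)] cyc_char[of a n b] that assms by auto
  have sp: "t3 \<le> q 1 + q 2 \<or> t3 \<le> q (n-1) + q (n-2)"
    by (rule split[OF t mn mn mn mn]; (rule E | rule N); use assms in arith)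
  then show False
  proof
    assume h: "t3 \<le> q 1 + q 2"
    show False
      by (rule core[of t1 t2 t3 "q 0" "q 1" "q 2" "q 3" "q 4" "q (n-1)", OF t mn mn mn mn mn _ _ _ _ _ _ _ _ _ _ _ _ h]; (rule E | rule N); use assms in arith)
  next
    assume h: "t3 \<le> q (n-1) + q (n-2)"
    show False
      by (rule core[of t1 t2 t3 "q 0" "q (n-1)" "q (n-2)" "q (n-3)" "q (n-4)" "q 1", OF t mn mn mn mn mn _ _ _ _ _ _ _ _ _ _ _ _ h];
          (rule E | rule N); use assms in arith)
  qed
qed

end
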